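(* Let $T\in\mathbb{N}$, $\Delta t>0$, $r\in\mathbb{R}$, $\mu\in\mathbb{R}$, $\sigma>0$, $S_0>0$, $B>0$ and $c\in\mathbb{R}$. Let $S_{j+1}=S_j\exp((\mu-\frac{\sigma^2}{2})\Delta t+\sigma\sqrt{\Delta t}Z_j)$, $j=0,\dots,T-1$, with $Z_j$ i.i.d. standard normal, and let the digital knock-up-in payoff be $$V(S_1,\dots,S_T)=\begin{cases}c&\text{if }\max_{j=1,\dots,T}S_j\ge B,\\0&\text{otherwise,}\end{cases}$$ with present value $PV_{t_0}(S_0)=e^{-rT\Delta t}\mathbb{E}(V(S_1,\dots,S_T))$. For $u=(u^{(1)},\dots,u^{(T)})\in[0,1]^T$ define recursively $S_0(u)=S_0$ and, for $t=0,\dots,T-1$, $$p_t=\Phi\left(\frac{\log(B/S_t(u))-(\mu-\frac{\sigma^2}{2})\Delta t}{\sigma\sqrt{\Delta t}}\right),\qquad S_{t+1}(u)=S_t(u)\exp\Big(\big(\mu-\tfrac{\sigma^2}{2}\big)\Delta t+\sigma\sqrt{\Delta t}\,\Phi^{-1}(p_t u^{(t+1)})\Big).$$ Then $$PV_{t_0}(S_0)=e^{-rT\Delta t}\int_0^1\cdots\int_0^1 c\Big((1-p_0)+p_0(1-p_1)+\dots+p_0\cdots p_{T-2}(1-p_{T-1})\Big)\,\mathrm{d}u^{(T)}\cdots\mathrm{d}u^{(1)}.$$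
   Context: $\Phi$ is the standard normal cumulative distribution function and $\Phi^{-1}$ its inverse. Observation dates are equidistant with spacing $\Delta t$, so $t_T-t_0=T\Delta t$; $\mu=r-b$ with $b$ the dividend yield. *)

theory Defs
  imports "HOL-Probability.Probability"
begin

definition Phi :: "real \<Rightarrow> real" where
  "Phi x = measure (density lborel (\<lambda>t. ennreal (std_normal_density t))) {..x}"

definition Phi_inv :: "real \<Rightarrow> real" where
  "Phi_inv y = inv_into UNIV Phi y"

fun S_path :: "real \<Rightarrow> real \<Rightarrow> real \<Rightarrow> real \<Rightarrow> (nat \<Rightarrow> real) \<Rightarrow> nat \<Rightarrow> real" where
  "S_path S0 mu sig dt z 0 = S0"
| "S_path S0 mu sig dt z (Suc j) =
     S_path S0 mu sig dt z j * exp ((mu - sig\<^sup>2 / 2) * dt + sig * sqrt dt * z j)"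

definition knock_in_payoff :: "nat \<Rightarrow> real \<Rightarrow> real \<Rightarrow> (nat \<Rightarrow> real) \<Rightarrow> real" where
  "knock_in_payoff T B c S = (if \<exists>j\<in>{1..T}. S j \<ge> B then c else 0)"

fun S_cond :: "real \<Rightarrow> real \<Rightarrow> real \<Rightarrow> real \<Rightarrow> real \<Rightarrow> (nat \<Rightarrow> real) \<Rightarrow> nat \<Rightarrow> real" where
  "S_cond S0 mu sig dt B u 0 = S0"
| "S_cond S0 mu sig dt B u (Suc t) =
     (let St = S_cond S0 mu sig dt B u t;
          pt = Phi ((ln (B / St) - (mu - sig\<^sup>2 / 2) * dt) / (sig * sqrt dt))
      in St * exp ((mu - sig\<^sup>2 / 2) * dt + sig * sqrt dt * Phi_inv (pt * u (Suc t))))"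

definition p_cond :: "real \<Rightarrow> real \<Rightarrow> real \<Rightarrow> real \<Rightarrow> real \<Rightarrow> (nat \<Rightarrow> real) \<Rightarrow> nat \<Rightarrow> real" where
  "p_cond S0 mu sig dt B u t =
     Phi ((ln (B / S_cond S0 mu sig dt B u t) - (mu - sig\<^sup>2 / 2) * dt) / (sig * sqrt dt))"

end

theory Submission
  imports Defs
begin


abbreviation NN :: "real measure" where
  "NN \<equiv> density lborel (\<lambda>t. ennreal (std_normal_density t))"

lemma NN_prob: "prob_space NN"
  using prob_space_normal_density[of 1 0] by simp

lemma NN_real_distr: "real_distribution NN"
  unfolding real_distribution_def real_distribution_axioms_def
  using NN_prob by simp

lemma sets_NN[simp, measurable_cong]: "sets NN = sets borel" by simp

lemma Phi_cdf: "Phi = cdf NN"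
  by (simp add: fun_eq_iff Phi_def cdf_def)

lemma NN_singleton: "measure NN {x} = 0"
proof -
  have "emeasure NN {x} = (\<integral>\<^sup>+ t. ennreal (std_normal_density t) * indicator {x} t \<partial>lborel)"
    by (simp add: emeasure_density)
  also have "\<dots> = (\<integral>\<^sup>+ t. ennreal (std_normal_density x) * indicator {x} t \<partial>lborel)"
    by (intro nn_integral_cong) (auto split: split_indicator)
  also have "\<dots> = 0" by simp
  finally show ?thesis by (simp add: measure_def)
qed

lemma Phi_isCont: "isCont Phi x"
proof -
  interpret R: real_distribution NN by (rule NN_real_distr)
  show ?thesis unfolding Phi_cdf using R.isCont_cdf NN_singleton by simp
qed

lemma Phi_strict: assumes "x < y" shows "Phi x < Phi y"
proof -
  interpret R: real_distribution NN by (rule NN_real_distr)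
  define R where "R = \<bar>x\<bar> + \<bar>y\<bar>"
  define m where "m = std_normal_density R"
  have mpos: "m > 0" unfolding m_def by (simp add: normal_density_pos)
  have lb: "m \<le> std_normal_density t" if "t \<in> {x<..y}" for t
  proof -
    have "\<bar>t\<bar> \<le> R" using that unfolding R_def by auto
    then have "t\<^sup>2 \<le> R\<^sup>2" by (metis abs_ge_zero power2_abs power_mono)
    then show ?thesis unfolding m_def std_normal_density_def
      by (intro mult_left_mono) auto
  qed
  have "ennreal (m * (y - x)) = (\<integral>\<^sup>+ t. ennreal m * indicator {x<..y} t \<partial>lborel)"
    using assms mpos by (subst nn_integral_cmult_indicator) (simp_all add: ennreal_mult)
  also have "\<dots> \<le> (\<integral>\<^sup>+ t. ennreal (std_normal_density t) * indicator {x<..y} t \<partial>lborel)"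
    by (intro nn_integral_mono) (auto split: split_indicator intro: lb)
  also have "\<dots> = emeasure NN {x<..y}" by (simp add: emeasure_density)
  finally have "m * (y - x) \<le> measure NN {x<..y}"
    by (simp add: R.emeasure_eq_measure)
  moreover have "measure NN {x<..y} = Phi y - Phi x"
    unfolding Phi_cdf using R.cdf_diff_eq assms by simp
  ultimately show ?thesis using mpos assms by (smt (verit) mult_pos_pos)
qed


lemma Phi_mono: "x \<le> y \<Longrightarrow> Phi x \<le> Phi y"
  using Phi_strict[of x y] by (cases "x = y") auto

lemma Phi_bot: "(Phi \<longlongrightarrow> 0) at_bot"
proof -
  interpret R: real_distribution NN by (rule NN_real_distr)
  show ?thesis unfolding Phi_cdf by (rule R.cdf_lim_at_bot)
qed

lemma Phi_top: "(Phi \<longlongrightarrow> 1) at_top"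
proof -
  interpret R: real_distribution NN by (rule NN_real_distr)
  show ?thesis unfolding Phi_cdf by (rule R.cdf_lim_at_top_prob)
qed

lemma Phi_nonneg: "0 \<le> Phi x"
  unfolding Phi_def by simp

lemma Phi_le1: "Phi x \<le> 1"
proof -
  interpret R: real_distribution NN by (rule NN_real_distr)
  show ?thesis unfolding Phi_cdf by (rule R.cdf_bounded_prob)
qed

lemma Phi_pos: "0 < Phi x"
  using Phi_strict[of "x - 1" x] Phi_nonneg[of "x - 1"] by simp

lemma Phi_less1: "Phi x < 1"
  using Phi_strict[of x "x + 1"] Phi_le1[of "x + 1"] by simp

lemma Phi_surj: assumes "0 < v" "v < 1" shows "\<exists>x. Phi x = v"
proof -
  have "eventually (\<lambda>x. Phi x < v) at_bot"
    using order_tendstoD(2)[OF Phi_bot assms(1)] .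
  then obtain a where a: "Phi a < v" by (auto simp: eventually_at_bot_linorder)
  have "eventually (\<lambda>x. Phi x > v) at_top"
    using order_tendstoD(1)[OF Phi_top assms(2)] .
  then obtain b0 where b0: "\<And>x. x \<ge> b0 \<Longrightarrow> Phi x > v" by (auto simp: eventually_at_top_linorder)
  define b where "b = max a b0"
  have b: "Phi b > v" "a \<le> b" using b0[of b] by (auto simp: b_def)
  show ?thesis using IVT[of Phi a v b] a b Phi_isCont by force
qed

lemma Phi_Phi_inv: assumes "0 < v" "v < 1" shows "Phi (Phi_inv v) = v"
  unfolding Phi_inv_def using Phi_surj[OF assms]
  by (intro f_inv_into_f) auto

lemma Phi_inv_le_iff: assumes "0 < v" "v < 1" shows "Phi_inv v \<le> x \<longleftrightarrow> v \<le> Phi x"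
proof -
  have "Phi_inv v \<le> x \<longleftrightarrow> Phi (Phi_inv v) \<le> Phi x"
    using Phi_strict Phi_mono by (metis not_le)
  then show ?thesis using Phi_Phi_inv[OF assms] by simp
qed

lemma Phi_inv_out: assumes "\<not> (0 < v \<and> v < 1)" shows "Phi_inv v = (SOME x. False)"
proof -
  have "\<And>x. Phi x \<noteq> v" using assms Phi_pos Phi_less1 by force
  then show ?thesis unfolding Phi_inv_def inv_into_def by simp
qed

lemma Phi_measurable[measurable]: "Phi \<in> borel_measurable borel"
  by (intro borel_measurable_mono monoI Phi_mono)

lemma Phi_inv_measurable[measurable]: "Phi_inv \<in> borel_measurable borel"
  unfolding borel_measurable_iff_le
proof
  fix a
  have "{w \<in> space borel. Phi_inv w \<le> a} =
     {w. 0 < w \<and> w < 1 \<and> w \<le> Phi a} \<union> {w. \<not> (0 < w \<and> w < 1) \<and> (SOME x. False) \<le> a}"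
  proof (intro set_eqI iffI)
    fix w assume "w \<in> {w \<in> space borel. Phi_inv w \<le> a}"
    then show "w \<in> {w. 0 < w \<and> w < 1 \<and> w \<le> Phi a} \<union> {w. \<not> (0 < w \<and> w < 1) \<and> (SOME x. False) \<le> a}"
      using Phi_inv_le_iff[of w a] Phi_inv_out[of w] by (cases "0 < w \<and> w < 1") auto
  next
    fix w assume "w \<in> {w. 0 < w \<and> w < 1 \<and> w \<le> Phi a} \<union> {w. \<not> (0 < w \<and> w < 1) \<and> (SOME x. False) \<le> a}"
    then show "w \<in> {w \<in> space borel. Phi_inv w \<le> a}"
      using Phi_inv_le_iff[of w a] Phi_inv_out[of w] by (cases "0 < w \<and> w < 1") auto
  qed
  also have "\<dots> \<in> sets borel" by measurable
  finally show "{w \<in> space borel. Phi_inv w \<le> a} \<in> sets borel" .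
qed



abbreviation UU :: "real measure" where
  "UU \<equiv> uniform_measure lborel {0..1::real}"

lemma UU_prob: "prob_space UU"
  by (rule prob_space_uniform_measure) auto

lemma sets_UU[simp, measurable_cong]: "sets UU = sets borel" by simp

lemma NN_lt: "measure NN {..<\<theta>} = Phi \<theta>"
proof -
  interpret R: real_distribution NN by (rule NN_real_distr)
  have "measure NN ({..<\<theta>} \<union> {\<theta>}) = measure NN {..<\<theta>} + measure NN {\<theta>}"
    by (intro R.finite_measure_Union) auto
  moreover have "{..<\<theta>} \<union> {\<theta>} = {..\<theta>}" by auto
  ultimately show ?thesis using NN_singleton by (simp add: Phi_def)
qed

lemma key_distr:
  fixes \<theta> :: real
  defines "p \<equiv> Phi \<theta>"
  shows "distr UU borel (\<lambda>v. Phi_inv (p * v)) = density NN (\<lambda>y. ennreal (indicator {..<\<theta>} y / p))"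
proof -
  have p: "0 < p" "p < 1" unfolding p_def using Phi_pos Phi_less1 by auto
  interpret R: real_distribution NN by (rule NN_real_distr)
  interpret U: prob_space UU by (rule UU_prob)
  have gm: "(\<lambda>v. Phi_inv (p * v)) \<in> measurable UU borel" by measurable
  have rd1: "real_distribution (distr UU borel (\<lambda>v. Phi_inv (p * v)))"
    unfolding real_distribution_def real_distribution_axioms_def
    using U.prob_space_distr[OF gm] by simp
  have dens: "measure (density NN (\<lambda>y. ennreal (indicator {..<\<theta>} y / p))) A
      = measure NN ({..<\<theta>} \<inter> A) / p" if A: "A \<in> sets borel" for A
  proof -
    have "emeasure (density NN (\<lambda>y. ennreal (indicator {..<\<theta>} y / p))) A
        = (\<integral>\<^sup>+ y. ennreal (indicator {..<\<theta>} y / p) * indicator A y \<partial>NN)"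
      using A by (subst emeasure_density) auto
    also have "\<dots> = (\<integral>\<^sup>+ y. ennreal (1 / p) * indicator ({..<\<theta>} \<inter> A) y \<partial>NN)"
      by (intro nn_integral_cong) (auto split: split_indicator)
    also have "\<dots> = ennreal (1/p) * emeasure NN ({..<\<theta>} \<inter> A)"
      using A by (intro nn_integral_cmult_indicator) auto
    also have "\<dots> = ennreal (measure NN ({..<\<theta>} \<inter> A) / p)"
      using p by (simp add: R.emeasure_eq_measure ennreal_mult[symmetric])
    finally show ?thesis using p by (simp add: measure_def)
  qed
  have rd2: "real_distribution (density NN (\<lambda>y. ennreal (indicator {..<\<theta>} y / p)))"
    unfolding real_distribution_def real_distribution_axioms_def
  proof (intro conjI)
    show "prob_space (density NN (\<lambda>y. ennreal (indicator {..<\<theta>} y / p)))"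
    proof
      have "emeasure (density NN (\<lambda>y. ennreal (indicator {..<\<theta>} y / p))) UNIV
          = (\<integral>\<^sup>+ y. ennreal (1 / p) * indicator ({..<\<theta>}) y \<partial>NN)"
        by (subst emeasure_density) (auto intro!: nn_integral_cong split: split_indicator)
      also have "\<dots> = ennreal (1/p) * emeasure NN {..<\<theta>}"
        by (intro nn_integral_cmult_indicator) auto
      also have "\<dots> = 1"
        using p NN_lt[of \<theta>] by (simp add: R.emeasure_eq_measure ennreal_mult[symmetric] p_def)
      finally show "emeasure (density NN (\<lambda>y. ennreal (indicator {..<\<theta>} y / p)))
         (space (density NN (\<lambda>y. ennreal (indicator {..<\<theta>} y / p)))) = 1" by simp
    qed
  qed simp
  show ?thesis
  proof (rule cdf_unique[OF rd1 rd2], rule ext)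
    fix x
    define m where "m = min 1 (Phi x / p)"
    have m: "0 < m" "m \<le> 1" unfolding m_def using p Phi_pos[of x] by auto
    have S: "((\<lambda>v. Phi_inv (p * v)) -` {..x} \<inter> space UU) \<inter> {0..1} - {0} = {0<..m}"
    proof (intro set_eqI iffI)
      fix v assume v: "v \<in> ((\<lambda>v. Phi_inv (p * v)) -` {..x} \<inter> space UU) \<inter> {0..1} - {0}"
      then have "0 < p * v" "p * v < 1" using p by (auto intro: mult_pos_pos) (smt (verit) mult_left_le)
      then have "p * v \<le> Phi x" using v Phi_inv_le_iff by auto
      then show "v \<in> {0<..m}" using v p unfolding m_def by (auto simp: field_simps)
    next
      fix v assume v: "v \<in> {0<..m}"
      then have v1: "0 < v" "v \<le> 1" "v \<le> Phi x / p" using m unfolding m_def by auto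
      then have "0 < p * v" "p * v < 1" using p by (auto intro: mult_pos_pos) (smt (verit) mult_left_le)
      moreover have "p * v \<le> Phi x" using v1 p by (auto simp: field_simps)
      ultimately show "v \<in> ((\<lambda>v. Phi_inv (p * v)) -` {..x} \<inter> space UU) \<inter> {0..1} - {0}"
        using v1 Phi_inv_le_iff by auto
    qed
    have pre: "(\<lambda>v. Phi_inv (p * v)) -` {..x} \<in> sets borel"
      using measurable_sets[OF gm, of "{..x}"] by simp
    have "cdf (distr UU borel (\<lambda>v. Phi_inv (p * v))) x
        = measure UU ((\<lambda>v. Phi_inv (p * v)) -` {..x} \<inter> space UU)"
      unfolding cdf_def by (rule measure_distr[OF gm]) auto
    also have "\<dots> = measure lborel ({0..1} \<inter> ((\<lambda>v. Phi_inv (p * v)) -` {..x} \<inter> space UU))"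
      by (subst measure_uniform_measure) (auto simp: pre)
    also have "\<dots> = measure lborel (((\<lambda>v. Phi_inv (p * v)) -` {..x} \<inter> space UU) \<inter> {0..1} - {0})"
      by (subst measure_Diff_null_set) (auto simp: Int_commute pre)
    also have "\<dots> = m" using S m by simp
    finally have c1: "cdf (distr UU borel (\<lambda>v. Phi_inv (p * v))) x = m" .
    have c2: "cdf (density NN (\<lambda>y. ennreal (indicator {..<\<theta>} y / p))) x = m"
    proof (cases "x < \<theta>")
      case True
      then have "{..<\<theta>} \<inter> {..x} = {..x}" by auto
      moreover have "Phi x < p" using Phi_strict True p_def by auto
      ultimately show ?thesis unfolding cdf_def using dens[of "{..x}"] p
        by (simp add: m_def Phi_def)
    next
      case False
      then have "{..<\<theta>} \<inter> {..x} = {..<\<theta>}" by auto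
      moreover have "p \<le> Phi x" using Phi_mono False p_def by auto
      ultimately show ?thesis unfolding cdf_def using dens[of "{..x}"] p NN_lt[of \<theta>]
        by (simp add: m_def p_def)
    qed
    show "cdf (distr UU borel (\<lambda>v. Phi_inv (p * v))) x =
          cdf (density NN (\<lambda>y. ennreal (indicator {..<\<theta>} y / p))) x"
      using c1 c2 by simp
  qed
qed



lemma key_integral:
  assumes F[measurable]: "F \<in> borel_measurable borel"
  shows "(\<integral>\<^sup>+ y. indicator {..<\<theta>} y * F y \<partial>NN)
       = ennreal (Phi \<theta>) * (\<integral>\<^sup>+ v. F (Phi_inv (Phi \<theta> * v)) \<partial>UU)"
proof -
  define p where "p = Phi \<theta>"
  have p: "0 < p" using Phi_pos p_def by auto
  have gm: "(\<lambda>v. Phi_inv (p * v)) \<in> measurable UU borel" by measurable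
  have "(\<integral>\<^sup>+ v. F (Phi_inv (p * v)) \<partial>UU) = (\<integral>\<^sup>+ y. F y \<partial>distr UU borel (\<lambda>v. Phi_inv (p * v)))"
    by (rule nn_integral_distr[symmetric, OF gm]) simp
  also have "\<dots> = (\<integral>\<^sup>+ y. F y \<partial>density NN (\<lambda>y. ennreal (indicator {..<\<theta>} y / p)))"
    unfolding p_def key_distr ..
  also have "\<dots> = (\<integral>\<^sup>+ y. ennreal (indicator {..<\<theta>} y / p) * F y \<partial>NN)"
    by (subst nn_integral_density) auto
  finally have "ennreal p * (\<integral>\<^sup>+ v. F (Phi_inv (p * v)) \<partial>UU)
      = ennreal p * (\<integral>\<^sup>+ y. ennreal (indicator {..<\<theta>} y / p) * F y \<partial>NN)" by simp
  also have "\<dots> = (\<integral>\<^sup>+ y. ennreal p * (ennreal (indicator {..<\<theta>} y / p) * F y) \<partial>NN)"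
    by (subst nn_integral_cmult) auto
  also have "\<dots> = (\<integral>\<^sup>+ y. indicator {..<\<theta>} y * F y \<partial>NN)"
    using p by (intro nn_integral_cong) (auto split: split_indicator simp: mult.assoc[symmetric] ennreal_mult[symmetric])
  finally show ?thesis unfolding p_def by simp
qed

lemma S_path_cong: "(\<And>i. i < j \<Longrightarrow> z i = z' i) \<Longrightarrow> S_path S0 mu sig dt z j = S_path S0 mu sig dt z' j"
  by (induction j) auto

lemma S_cond_Suc: "S_cond S0 mu sig dt B u (Suc t) =
   S_cond S0 mu sig dt B u t * exp ((mu - sig\<^sup>2 / 2) * dt + sig * sqrt dt * Phi_inv (p_cond S0 mu sig dt B u t * u (Suc t)))"
  by (simp add: p_cond_def Let_def)

lemma S_cond_cong: "(\<And>i. i \<in> {1..t} \<Longrightarrow> u i = u' i) \<Longrightarrow> S_cond S0 mu sig dt B u t = S_cond S0 mu sig dt B u' t"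
proof (induction t)
  case 0 then show ?case by simp
next
  case (Suc t)
  then have "S_cond S0 mu sig dt B u t = S_cond S0 mu sig dt B u' t" by auto
  moreover have "u (Suc t) = u' (Suc t)" using Suc by auto
  ultimately show ?case by (simp add: Let_def)
qed

lemma p_cond_cong: "(\<And>i. i \<in> {1..t} \<Longrightarrow> u i = u' i) \<Longrightarrow> p_cond S0 mu sig dt B u t = p_cond S0 mu sig dt B u' t"
  unfolding p_cond_def using S_cond_cong by metis

lemma S_cond_pos: "S0 > 0 \<Longrightarrow> S_cond S0 mu sig dt B u t > 0"
  by (induction t) (auto simp: Let_def)

lemma S_path_meas:
  assumes "{..<j} \<subseteq> I" "\<And>i. i \<in> I \<Longrightarrow> sets (M i) = sets borel"
  shows "(\<lambda>z. S_path S0 mu sig dt z j) \<in> borel_measurable (PiM I M)"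
  using assms(1)
proof (induction j)
  case 0 then show ?case by simp
next
  case (Suc j)
  have j: "j \<in> I" using Suc by auto
  have e: "measurable (PiM I M) (M j) = measurable (PiM I M) borel"
    by (rule measurable_cong_sets[OF refl assms(2)[OF j]])
  have c[measurable]: "(\<lambda>z. z j) \<in> borel_measurable (PiM I M)"
    using measurable_component_singleton[OF j, of M] unfolding e .
  have [measurable]: "(\<lambda>z. S_path S0 mu sig dt z j) \<in> borel_measurable (PiM I M)" 
  proof -
    have "{..<j} \<subseteq> I" using Suc.prems by auto
    then show ?thesis by (rule Suc.IH)
  qed
  show ?case unfolding S_path.simps by measurable
qed

lemma S_cond_meas:
  assumes "{1..t} \<subseteq> I" "\<And>i. i \<in> I \<Longrightarrow> sets (M i) = sets borel"
  shows "(\<lambda>u. S_cond S0 mu sig dt B u t) \<in> borel_measurable (PiM I M)"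
  using assms(1)
proof (induction t)
  case 0 then show ?case by simp
next
  case (Suc t)
  have j: "Suc t \<in> I" using Suc by auto
  have e: "measurable (PiM I M) (M (Suc t)) = measurable (PiM I M) borel"
    by (rule measurable_cong_sets[OF refl assms(2)[OF j]])
  have c[measurable]: "(\<lambda>z. z (Suc t)) \<in> borel_measurable (PiM I M)"
    using measurable_component_singleton[OF j, of M] unfolding e .
  have [measurable]: "(\<lambda>z. S_cond S0 mu sig dt B z t) \<in> borel_measurable (PiM I M)"
  proof -
    have "{1..t} \<subseteq> I" using Suc.prems by auto
    then show ?thesis by (rule Suc.IH)
  qed
  show ?case unfolding S_cond_Suc p_cond_def by measurable
qed

lemma p_cond_meas:
  assumes "{1..t} \<subseteq> I" "\<And>i. i \<in> I \<Longrightarrow> sets (M i) = sets borel"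
  shows "(\<lambda>u. p_cond S0 mu sig dt B u t) \<in> borel_measurable (PiM I M)"
  using S_cond_meas[OF assms] unfolding p_cond_def by measurable



lemma all_pred:
  assumes "{..<n} \<subseteq> I" "\<And>i. i \<in> I \<Longrightarrow> sets (M i) = sets borel"
  shows "Measurable.pred (PiM I M) (\<lambda>z. \<forall>j\<in>{1..n}. S_path S0 mu sig dt z j < B)"
  using assms(1)
proof (induction n)
  case 0 then show ?case by simp
next
  case (Suc n)
  have [measurable]: "Measurable.pred (PiM I M) (\<lambda>z. \<forall>j\<in>{1..n}. S_path S0 mu sig dt z j < B)"
  proof -
    have "{..<n} \<subseteq> I" using Suc.prems by auto
    then show ?thesis by (rule Suc.IH)
  qed
  have [measurable]: "(\<lambda>z. S_path S0 mu sig dt z (Suc n)) \<in> borel_measurable (PiM I M)"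
    by (rule S_path_meas[OF Suc.prems assms(2)])
  have e: "(\<lambda>z. \<forall>j\<in>{1..Suc n}. S_path S0 mu sig dt z j < B) =
     (\<lambda>z. (\<forall>j\<in>{1..n}. S_path S0 mu sig dt z j < B) \<and> S_path S0 mu sig dt z (Suc n) < B)"
    by (auto simp: fun_eq_iff le_Suc_eq simp del: S_path.simps)
  show ?case unfolding e by measurable
qed

lemma NN_psf: "product_sigma_finite (\<lambda>_. NN)"
  unfolding product_sigma_finite_def
  using prob_space_imp_sigma_finite[OF NN_prob] by simp

lemma UU_psf: "product_sigma_finite (\<lambda>_. UU)"
  unfolding product_sigma_finite_def
  using prob_space_imp_sigma_finite[OF UU_prob] by simp

lemma p_cond_nonneg: "0 \<le> p_cond S0 mu sig dt B u t"
  unfolding p_cond_def by (rule Phi_nonneg)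

lemma p_cond_le1: "p_cond S0 mu sig dt B u t \<le> 1"
  unfolding p_cond_def by (rule Phi_le1)

lemma main_ind:
  fixes S0 B :: real
  assumes dt: "dt > 0" and sig: "sig > 0" and S0: "S0 > 0" and B: "B > 0"
  shows "F \<in> borel_measurable borel \<Longrightarrow>
    (\<integral>\<^sup>+z. (if \<forall>j\<in>{1..T}. S_path S0 mu sig dt z j < B then F (S_path S0 mu sig dt z T) else 0) \<partial>PiM {..<T} (\<lambda>_. NN))
  = (\<integral>\<^sup>+u. ennreal (\<Prod>i<T. p_cond S0 mu sig dt B u i) * F (S_cond S0 mu sig dt B u T) \<partial>PiM {1..T} (\<lambda>_. UU))"
proof (induction T arbitrary: F)
  case 0
  then show ?case by (simp add: PiM_empty)
next
  case (Suc T)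
  note F[measurable] = Suc.prems
  define a where "a = (mu - sig\<^sup>2 / 2) * dt"
  define b where "b = sig * sqrt dt"
  have b: "b > 0" unfolding b_def using dt sig by simp
  let ?SP = "S_path S0 mu sig dt" and ?SC = "S_cond S0 mu sig dt B" and ?PC = "p_cond S0 mu sig dt B"
  define G where "G = (\<lambda>s. \<integral>\<^sup>+y. (if s * exp (a + b * y) < B then F (s * exp (a + b * y)) else 0) \<partial>NN)"
  define H where "H = (\<lambda>s. ennreal (Phi ((ln (B / s) - a) / b)) *
      (\<integral>\<^sup>+v. F (s * exp (a + b * Phi_inv (Phi ((ln (B / s) - a) / b) * v))) \<partial>UU))"
  interpret PN: product_sigma_finite "\<lambda>_. NN" by (rule NN_psf)
  interpret PU: product_sigma_finite "\<lambda>_. UU" by (rule UU_psf)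
  have Gm: "G \<in> borel_measurable borel"
  proof -
    have "(\<lambda>(s, y). (if s * exp (a + b * y) < B then F (s * exp (a + b * y)) else 0)) \<in> borel_measurable (borel \<Otimes>\<^sub>M NN)"
      by measurable
    then show ?thesis unfolding G_def by (rule sigma_finite_measure.borel_measurable_nn_integral[OF prob_space_imp_sigma_finite[OF NN_prob]])
  qed
  have GH: "G s = H s" if s: "s > 0" for s
  proof -
    define \<theta> where "\<theta> = (ln (B / s) - a) / b"
    have iff: "s * exp (a + b * y) < B \<longleftrightarrow> y < \<theta>" for y
    proof -
      have "s * exp (a + b * y) < B \<longleftrightarrow> exp (a + b * y) < exp (ln (B / s))"
        using s B by (simp add: field_simps)
      also have "\<dots> \<longleftrightarrow> a + b * y < ln (B / s)" by simp
      also have "\<dots> \<longleftrightarrow> y < \<theta>" unfolding \<theta>_def using b by (simp add: field_simps)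
      finally show ?thesis .
    qed
    have "G s = (\<integral>\<^sup>+y. indicator {..<\<theta>} y * F (s * exp (a + b * y)) \<partial>NN)"
      unfolding G_def by (intro nn_integral_cong) (auto simp: iff split: split_indicator)
    also have "\<dots> = H s" unfolding H_def \<theta>_def[symmetric]
      by (rule key_integral) measurable
    finally show ?thesis .
  qed
  have fm: "(\<lambda>z. if \<forall>j\<in>{1..Suc T}. ?SP z j < B then F (?SP z (Suc T)) else 0)
        \<in> borel_measurable (PiM (insert T {..<T}) (\<lambda>_. NN))"
  proof -
    have [measurable]: "Measurable.pred (PiM (insert T {..<T}) (\<lambda>_. NN)) (\<lambda>z. \<forall>j\<in>{1..Suc T}. ?SP z j < B)"
      by (rule all_pred) auto
    have [measurable]: "(\<lambda>z. ?SP z (Suc T)) \<in> borel_measurable (PiM (insert T {..<T}) (\<lambda>_. NN))"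
      by (rule S_path_meas) auto
    show ?thesis by measurable
  qed
  have "(\<integral>\<^sup>+z. (if \<forall>j\<in>{1..Suc T}. ?SP z j < B then F (?SP z (Suc T)) else 0) \<partial>PiM {..<Suc T} (\<lambda>_. NN))
     = (\<integral>\<^sup>+x. \<integral>\<^sup>+y. (if \<forall>j\<in>{1..Suc T}. ?SP (x(T := y)) j < B then F (?SP (x(T := y)) (Suc T)) else 0) \<partial>NN \<partial>PiM {..<T} (\<lambda>_. NN))"
    unfolding lessThan_Suc by (rule PN.product_nn_integral_insert[OF _ _ fm]) auto
  also have "\<dots> = (\<integral>\<^sup>+x. (if \<forall>j\<in>{1..T}. ?SP x j < B then G (?SP x T) else 0) \<partial>PiM {..<T} (\<lambda>_. NN))"
  proof (intro nn_integral_cong)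
    fix x
    have eq: "?SP (x(T := y)) j = ?SP x j" if "j \<le> T" for j y
      using that by (intro S_path_cong) auto
    have eqS: "?SP (x(T := y)) (Suc T) = ?SP x T * exp (a + b * y)" for y
      using eq[of T y] by (simp add: a_def b_def)
    have all: "(\<forall>j\<in>{1..Suc T}. ?SP (x(T := y)) j < B) \<longleftrightarrow>
        (\<forall>j\<in>{1..T}. ?SP x j < B) \<and> ?SP x T * exp (a + b * y) < B" for y
    proof -
      have e: "{1..Suc T} = insert (Suc T) {1..T}" by auto
      show ?thesis unfolding e ball_simps eqS using eq[of _ y] by (auto simp: a_def b_def)
    qed
    show "(\<integral>\<^sup>+y. (if \<forall>j\<in>{1..Suc T}. ?SP (x(T := y)) j < B then F (?SP (x(T := y)) (Suc T)) else 0) \<partial>NN)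
        = (if \<forall>j\<in>{1..T}. ?SP x j < B then G (?SP x T) else 0)"
    proof (cases "\<forall>j\<in>{1..T}. ?SP x j < B")
      case True
      show ?thesis unfolding G_def if_P[OF True]
        by (intro nn_integral_cong, simp only: all eqS, simp add: True)
    next
      case False
      have "(\<integral>\<^sup>+y. (if \<forall>j\<in>{1..Suc T}. ?SP (x(T := y)) j < B then F (?SP (x(T := y)) (Suc T)) else 0) \<partial>NN)
          = (\<integral>\<^sup>+y. 0 \<partial>NN)"
        by (intro nn_integral_cong, simp only: all False simp_thms if_False)
      then show ?thesis unfolding if_not_P[OF False] by simp
    qed
  qed
  also have "\<dots> = (\<integral>\<^sup>+u. ennreal (\<Prod>i<T. ?PC u i) * G (?SC u T) \<partial>PiM {1..T} (\<lambda>_. UU))"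
    by (rule Suc.IH[OF Gm])
  also have "\<dots> = (\<integral>\<^sup>+u. ennreal (\<Prod>i<T. ?PC u i) * H (?SC u T) \<partial>PiM {1..T} (\<lambda>_. UU))"
    by (intro nn_integral_cong) (simp add: GH S_cond_pos S0)
  also have "\<dots> = (\<integral>\<^sup>+x. \<integral>\<^sup>+y. ennreal (\<Prod>i<Suc T. ?PC (x(Suc T := y)) i) * F (?SC (x(Suc T := y)) (Suc T)) \<partial>UU \<partial>PiM {1..T} (\<lambda>_. UU))"
  proof (intro nn_integral_cong)
    fix x
    have eqP: "?PC (x(Suc T := y)) i = ?PC x i" if "i \<le> T" for i y
      using that by (intro p_cond_cong) auto
    have eqC: "?SC (x(Suc T := y)) T = ?SC x T" for y
      by (intro S_cond_cong) auto
    have eqS: "?SC (x(Suc T := y)) (Suc T) = ?SC x T * exp (a + b * Phi_inv (?PC x T * y))" for y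
      unfolding S_cond_Suc eqC eqP[OF order_refl] by (simp add: a_def b_def)
    have eqPr: "(\<Prod>i<Suc T. ?PC (x(Suc T := y)) i) = (\<Prod>i<T. ?PC x i) * ?PC x T" for y
      using eqP by (simp add: prod.lessThan_Suc)
    have pc: "?PC x T = Phi ((ln (B / ?SC x T) - a) / b)" unfolding p_cond_def a_def b_def ..
    have "(\<integral>\<^sup>+y. ennreal (\<Prod>i<Suc T. ?PC (x(Suc T := y)) i) * F (?SC (x(Suc T := y)) (Suc T)) \<partial>UU)
       = (\<integral>\<^sup>+y. ennreal (\<Prod>i<T. ?PC x i) * (ennreal (?PC x T) * F (?SC x T * exp (a + b * Phi_inv (?PC x T * y)))) \<partial>UU)"
      unfolding eqPr eqS
      by (intro nn_integral_cong) (simp add: ennreal_mult prod_nonneg p_cond_nonneg mult.assoc)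
    also have "\<dots> = ennreal (\<Prod>i<T. ?PC x i) * (ennreal (?PC x T) * (\<integral>\<^sup>+y. F (?SC x T * exp (a + b * Phi_inv (?PC x T * y))) \<partial>UU))"
      by (simp add: nn_integral_cmult)
    also have "\<dots> = ennreal (\<Prod>i<T. ?PC x i) * H (?SC x T)"
      unfolding H_def pc[symmetric] ..
    finally show "ennreal (\<Prod>i<T. ?PC x i) * H (?SC x T) = (\<integral>\<^sup>+y. ennreal (\<Prod>i<Suc T. ?PC (x(Suc T := y)) i) * F (?SC (x(Suc T := y)) (Suc T)) \<partial>UU)"
      by simp
  qed
  also have "\<dots> = (\<integral>\<^sup>+u. ennreal (\<Prod>i<Suc T. ?PC u i) * F (?SC u (Suc T)) \<partial>PiM {1..Suc T} (\<lambda>_. UU))"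
  proof -
    have e: "{1..Suc T} = insert (Suc T) {1..T}" by auto
    have gm: "(\<lambda>u. ennreal (\<Prod>i<Suc T. ?PC u i) * F (?SC u (Suc T))) \<in> borel_measurable (PiM (insert (Suc T) {1..T}) (\<lambda>_. UU))"
    proof -
      have [measurable]: "(\<lambda>u. \<Prod>i<Suc T. ?PC u i) \<in> borel_measurable (PiM (insert (Suc T) {1..T}) (\<lambda>_. UU))"
        by (intro borel_measurable_prod p_cond_meas) auto
      have [measurable]: "(\<lambda>u. ?SC u (Suc T)) \<in> borel_measurable (PiM (insert (Suc T) {1..T}) (\<lambda>_. UU))"
        by (intro S_cond_meas) auto
      show ?thesis by measurable
    qed
    show ?thesis unfolding e
      by (rule PU.product_nn_integral_insert[symmetric, OF _ _ gm]) auto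
  qed
  finally show ?case .
qed



lemma telescope: "(\<Sum>k<(T::nat). (\<Prod>i<k. p i) * (1 - p k)) = 1 - (\<Prod>i<T. p i :: real)"
  by (induction T) (auto simp: algebra_simps)

theorem theorem2p9:
  fixes T :: nat and dt r mu sig S0 B c :: real
    and M :: "'a measure" and Z :: "nat \<Rightarrow> 'a \<Rightarrow> real"
  assumes "dt > 0" and "sig > 0" and "S0 > 0" and "B > 0"
    and "prob_space M"
    and "prob_space.indep_vars M (\<lambda>_. borel) Z {..<T}"
    and "\<And>j. j < T \<Longrightarrow> distributed M lborel (Z j) (\<lambda>x. ennreal (std_normal_density x))"
  shows "exp (- r * real T * dt) *
           prob_space.expectation M
             (\<lambda>\<omega>. knock_in_payoff T B c (S_path S0 mu sig dt (\<lambda>j. Z j \<omega>)))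
       = exp (- r * real T * dt) *
           integral\<^sup>L (PiM {1..T} (\<lambda>_. uniform_measure lborel {0..1::real}))
             (\<lambda>u. c * (\<Sum>k<T. (\<Prod>i<k. p_cond S0 mu sig dt B u i)
                                * (1 - p_cond S0 mu sig dt B u k)))"
proof -
  interpret P: prob_space M by fact
  let ?SP = "S_path S0 mu sig dt" and ?PC = "p_cond S0 mu sig dt B"
  define I where "I = {..<T}"
  define PN where "PN = PiM I (\<lambda>_. NN)"
  define PU where "PU = PiM {1..T} (\<lambda>_. UU)"
  interpret PNp: prob_space PN unfolding PN_def by (intro prob_space_PiM NN_prob)
  interpret PUp: prob_space PU unfolding PU_def by (intro prob_space_PiM UU_prob)
  define h where "h = (\<lambda>z. if \<forall>j\<in>{1..T}. ?SP z j < B then 0 else c)"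
  define A where "A = (\<lambda>z. if \<forall>j\<in>{1..T}. ?SP z j < B then 1 else (0::real))"
  have hA: "h z = c - c * A z" for z unfolding h_def A_def by simp
  have knock: "knock_in_payoff T B c (?SP z) = h z" for z
    unfolding knock_in_payoff_def h_def by (auto simp: not_le)
  have Am: "A \<in> borel_measurable (PiM I M')" if "\<And>i. i \<in> I \<Longrightarrow> sets (M' i) = sets borel" for M'
  proof -
    have [measurable]: "Measurable.pred (PiM I M') (\<lambda>z. \<forall>j\<in>{1..T}. ?SP z j < B)"
      by (rule all_pred) (auto simp: I_def that)
    show ?thesis unfolding A_def by measurable
  qed
  have AmN: "A \<in> borel_measurable PN" unfolding PN_def by (rule Am) simp
  have Prm: "(\<lambda>u. \<Prod>i<T. ?PC u i) \<in> borel_measurable PU"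
    unfolding PU_def by (intro borel_measurable_prod p_cond_meas) auto
  have key: "integral\<^sup>L PN A = integral\<^sup>L PU (\<lambda>u. \<Prod>i<T. ?PC u i)"
  proof -
    have "integral\<^sup>L PN A = enn2real (\<integral>\<^sup>+z. ennreal (A z) \<partial>PN)"
      by (rule integral_eq_nn_integral[OF AmN]) (auto simp: A_def)
    also have "(\<integral>\<^sup>+z. ennreal (A z) \<partial>PN) =
        (\<integral>\<^sup>+z. (if \<forall>j\<in>{1..T}. ?SP z j < B then (\<lambda>_. 1) (?SP z T) else 0) \<partial>PiM {..<T} (\<lambda>_. NN))"
      unfolding PN_def I_def A_def by (intro nn_integral_cong) simp
    also have "\<dots> = (\<integral>\<^sup>+u. ennreal (\<Prod>i<T. ?PC u i) * (\<lambda>_. 1) (S_cond S0 mu sig dt B u T) \<partial>PiM {1..T} (\<lambda>_. UU))"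
      by (rule main_ind) (use assms in auto)
    also have "\<dots> = (\<integral>\<^sup>+u. ennreal (\<Prod>i<T. ?PC u i) \<partial>PU)"
      unfolding PU_def by simp
    also have "enn2real \<dots> = integral\<^sup>L PU (\<lambda>u. \<Prod>i<T. ?PC u i)"
      by (rule integral_eq_nn_integral[symmetric]) (auto intro: Prm prod_nonneg p_cond_nonneg)
    finally show ?thesis .
  qed
  have lhs: "P.expectation (\<lambda>\<omega>. knock_in_payoff T B c (?SP (\<lambda>j. Z j \<omega>))) = c - c * integral\<^sup>L PN A"
  proof (cases "T = 0")
    case True
    then show ?thesis
      unfolding knock_in_payoff_def A_def by (simp add: PNp.prob_space)
  next
    case False
    then have Ine: "I \<noteq> {}" unfolding I_def by auto
    have rv: "Z i \<in> measurable M borel" if "i \<in> I" for i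
      using distributed_measurable[OF assms(7)[of i]] that unfolding I_def by simp
    have "distr M (PiM I (\<lambda>_. borel)) (\<lambda>x. \<lambda>i\<in>I. Z i x) = PiM I (\<lambda>i. distr M borel (Z i))"
      using P.indep_vars_iff_distr_eq_PiM'[OF Ine rv] assms(6) unfolding I_def by auto
    also have "\<dots> = PN"
      unfolding PN_def
    proof (rule PiM_cong[OF refl])
      fix i assume "i \<in> I"
      then have d: "distributed M lborel (Z i) (\<lambda>x. ennreal (std_normal_density x))"
        using assms(7) unfolding I_def by auto
      have "distr M borel (Z i) = distr M lborel (Z i)" by (rule distr_cong) auto
      also have "\<dots> = NN" by (rule distributed_distr_eq_density[OF d])
      finally show "distr M borel (Z i) = NN" .
    qed
    finally have D: "distr M (PiM I (\<lambda>_. borel)) (\<lambda>x. \<lambda>i\<in>I. Z i x) = PN" .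
    have Xm: "(\<lambda>x. \<lambda>i\<in>I. Z i x) \<in> measurable M (PiM I (\<lambda>_. borel))"
      by (intro measurable_restrict rv)
    have hm: "h \<in> borel_measurable (PiM I (\<lambda>_. borel))"
    proof -
      have e: "h = (\<lambda>z. c - c * A z)" using hA by (intro ext) simp
      have [measurable]: "A \<in> borel_measurable (PiM I (\<lambda>_. borel))" by (rule Am) simp
      show ?thesis unfolding e by measurable
    qed
    have "P.expectation (\<lambda>\<omega>. knock_in_payoff T B c (?SP (\<lambda>j. Z j \<omega>)))
        = P.expectation (\<lambda>\<omega>. h (\<lambda>i\<in>I. Z i \<omega>))"
    proof (intro Bochner_Integration.integral_cong refl)
      fix \<omega>
      have "?SP (\<lambda>j. Z j \<omega>) j = ?SP (\<lambda>i\<in>I. Z i \<omega>) j" if "j \<le> T" for j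
        using that by (intro S_path_cong) (auto simp: I_def)
      then show "knock_in_payoff T B c (?SP (\<lambda>j. Z j \<omega>)) = h (\<lambda>i\<in>I. Z i \<omega>)"
        unfolding knock h_def by auto
    qed
    also have "\<dots> = integral\<^sup>L (distr M (PiM I (\<lambda>_. borel)) (\<lambda>x. \<lambda>i\<in>I. Z i x)) h"
      by (rule integral_distr[symmetric, OF Xm hm])
    also have "\<dots> = integral\<^sup>L PN h" unfolding D ..
    also have "\<dots> = integral\<^sup>L PN (\<lambda>z. c - c * A z)" unfolding hA ..
    also have "\<dots> = c - c * integral\<^sup>L PN A"
    proof -
      have Ai: "integrable PN A"
        by (rule PNp.integrable_const_bound[where B=1, OF _ AmN]) (auto simp: A_def)
      show ?thesis using Ai by (simp add: PNp.prob_space)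
    qed
    finally show ?thesis .
  qed
  have rhs: "integral\<^sup>L PU (\<lambda>u. c * (\<Sum>k<T. (\<Prod>i<k. ?PC u i) * (1 - ?PC u k)))
      = c - c * integral\<^sup>L PU (\<lambda>u. \<Prod>i<T. ?PC u i)"
  proof -
    have Pi: "integrable PU (\<lambda>u. \<Prod>i<T. ?PC u i)"
    proof (rule PUp.integrable_const_bound[where B=1, OF _ Prm], intro AE_I2)
      fix x
      have "0 \<le> (\<Prod>i<T. ?PC x i)" by (intro prod_nonneg p_cond_nonneg)
      moreover have "(\<Prod>i<T. ?PC x i) \<le> 1" by (intro prod_le_1 p_cond_nonneg p_cond_le1 conjI)
      ultimately show "norm (\<Prod>i<T. ?PC x i) \<le> 1" by simp
    qed
    show ?thesis unfolding telescope using Pi by (simp add: PUp.prob_space right_diff_distrib)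
  qed
  show ?thesis using lhs rhs key unfolding PU_def by simp
qed

end
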